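(* Let $k\ge1$, $p\in[1,\infty)$, let $A_0,\dots,A_{k-1}\in\mathbb{C}$ be constants and $A_k$ an entire function, and consider $$f^{(k)}+A_{k-1}f^{(k-1)}+\cdots+A_{1}f'+A_{0}f=A_{k}.$$ If some solution $f$ of this equation belongs to $F^{p,k}$, then $A_k\in F^p$.
   Context: $dm$ is Lebesgue area measure. $F^p$ is the space of entire $f$ with $\|f\|_p^p=\int_{\mathbb{C}}|f(z)e^{-\frac12|z|^2}|^p\,dm(z)<\infty$. For a positive integer $m$, $F^{p,m}$ is the space of entire $f$ with $\sum_{\alpha=0}^{m}\|f^{(\alpha)}\|_p<\infty$. *)

theory Defs
  imports "HOL-Complex_Analysis.Complex_Analysis"
begin

text \<open>The p-th power of the Fock norm: integral over C (Lebesgue area measure lborel)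
  of |f(z) e^{-|z|^2/2}|^p, as an extended nonnegative real.\<close>
definition fock_integral :: "real \<Rightarrow> (complex \<Rightarrow> complex) \<Rightarrow> ennreal" where
  "fock_integral p f = (\<integral>\<^sup>+ z. ennreal ((cmod (f z) * exp (- (cmod z)\<^sup>2 / 2)) powr p) \<partial>lborel)"

definition in_Fock :: "real \<Rightarrow> (complex \<Rightarrow> complex) \<Rightarrow> bool" where
  "in_Fock p f \<longleftrightarrow> f holomorphic_on UNIV \<and> fock_integral p f < \<infinity>"

text \<open>F^{p,m}: entire f with sum_{alpha=0}^m ||f^(alpha)||_p finite, i.e. each derivative
  up to order m has finite Fock norm.\<close>
definition in_Fock_deriv :: "real \<Rightarrow> nat \<Rightarrow> (complex \<Rightarrow> complex) \<Rightarrow> bool" where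
  "in_Fock_deriv p m f \<longleftrightarrow> f holomorphic_on UNIV \<and>
     (\<forall>\<alpha>\<le>m. fock_integral p ((deriv ^^ \<alpha>) f) < \<infinity>)"

end

theory Submission
  imports Defs
begin

lemma powr_sum_bound:
  fixes y :: "nat \<Rightarrow> real" and p :: real
  assumes "\<And>j. 0 \<le> y j" and "0 \<le> p"
  shows "(\<Sum>j\<le>k. y j) powr p \<le> (real k + 1) powr p * (\<Sum>j\<le>k. y j powr p)"
proof -
  define m where "m = Max (y ` {..k})"
  obtain i where i: "i \<le> k" "m = y i"
  proof -
    have "m \<in> y ` {..k}" unfolding m_def by (rule Max_in) auto
    thus ?thesis using that by auto
  qed
  have le: "\<And>j. j \<le> k \<Longrightarrow> y j \<le> m" unfolding m_def by auto
  have "(\<Sum>j\<le>k. y j) \<le> (\<Sum>j\<le>k. m)" by (rule sum_mono) (simp add: le)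
  also have "\<dots> = (real k + 1) * m" by simp
  finally have s: "(\<Sum>j\<le>k. y j) \<le> (real k + 1) * m" .
  have m0: "0 \<le> m" using i assms(1) by simp
  have "(\<Sum>j\<le>k. y j) powr p \<le> ((real k + 1) * m) powr p"
    by (rule powr_mono2) (use assms s in \<open>auto intro: sum_nonneg\<close>)
  also have "\<dots> = (real k + 1) powr p * m powr p" using m0 by (simp add: powr_mult)
  also have "m powr p \<le> (\<Sum>j\<le>k. y j powr p)"
    using i member_le_sum[of i "{..k}" "\<lambda>j. y j powr p"] by simp
  hence "(real k + 1) powr p * m powr p \<le> (real k + 1) powr p * (\<Sum>j\<le>k. y j powr p)"
    by (intro mult_left_mono) auto
  finally show ?thesis .
qed

theorem theorem1p4:
  fixes k :: nat and p :: real and A :: "nat \<Rightarrow> complex"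
    and Ak f :: "complex \<Rightarrow> complex"
  assumes "k \<ge> 1" and "1 \<le> p"
    and "Ak holomorphic_on UNIV"
    and "f holomorphic_on UNIV"
    and "\<And>z. (deriv ^^ k) f z + (\<Sum>j<k. A j * (deriv ^^ j) f z) = Ak z"
    and "in_Fock_deriv p k f"
  shows "in_Fock p Ak"
proof -
  define g where "g j = (deriv ^^ j) f" for j
  define y where "y j z = cmod (g j z) * exp (- (cmod z)\<^sup>2 / 2)" for j z
  define M where "M = 1 + (\<Sum>j<k. cmod (A j))"
  have M1: "1 \<le> M" unfolding M_def by (simp add: sum_nonneg)
  have y0: "0 \<le> y j z" for j z unfolding y_def by simp
  have gmeas: "g j \<in> borel_measurable borel" for j
  proof -
    have "g j holomorphic_on UNIV" unfolding g_def
      by (rule holomorphic_higher_deriv[OF assms(4)]) simp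
    hence "continuous_on UNIV (g j)" by (rule holomorphic_on_imp_continuous_on)
    thus ?thesis by (rule borel_measurable_continuous_onI)
  qed
  have ymeas: "(\<lambda>z. ennreal (y j z powr p)) \<in> borel_measurable lborel" for j
    unfolding y_def using gmeas[of j] by measurable
  have fin: "j \<le> k \<Longrightarrow> fock_integral p (g j) < \<infinity>" for j
    using assms(6) unfolding in_Fock_deriv_def g_def by auto
  have pt1: "cmod (Ak z) \<le> M * (\<Sum>j\<le>k. cmod (g j z))" for z
  proof -
    have "cmod (Ak z) \<le> cmod (g k z) + (\<Sum>j<k. cmod (A j) * cmod (g j z))"
      using assms(5)[of z, symmetric] unfolding g_def
      by (metis (no_types, lifting) norm_mult norm_sum norm_triangle_ineq order_trans add_left_mono sum.cong)
    also have "\<dots> \<le> M * cmod (g k z) + (\<Sum>j<k. M * cmod (g j z))"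
    proof (intro add_mono sum_mono mult_right_mono)
      show "cmod (g k z) \<le> M * cmod (g k z)" using M1 by (simp add: mult_le_cancel_right1)
      fix j assume "j \<in> {..<k}"
      thus "cmod (A j) \<le> M" unfolding M_def
        using member_le_sum[of j "{..<k}" "\<lambda>j. cmod (A j)"] by simp
    qed simp
    also have "\<dots> = M * (\<Sum>j\<le>k. cmod (g j z))"
      by (simp add: lessThan_Suc_atMost[symmetric] sum_distrib_left algebra_simps)
    finally show ?thesis .
  qed
  define C where "C = M powr p * (real k + 1) powr p"
  have C0: "0 \<le> C" unfolding C_def by simp
  have pt: "(cmod (Ak z) * exp (- (cmod z)\<^sup>2 / 2)) powr p \<le> C * (\<Sum>j\<le>k. y j z powr p)" for z
  proof -
    have "cmod (Ak z) * exp (- (cmod z)\<^sup>2 / 2) \<le> M * (\<Sum>j\<le>k. y j z)"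
      using mult_right_mono[OF pt1[of z], of "exp (- (cmod z)\<^sup>2 / 2)"]
      by (simp add: y_def sum_distrib_left sum_distrib_right mult_ac)
    hence "(cmod (Ak z) * exp (- (cmod z)\<^sup>2 / 2)) powr p \<le> (M * (\<Sum>j\<le>k. y j z)) powr p"
      by (intro powr_mono2) (use assms(2) in auto)
    also have "\<dots> = M powr p * (\<Sum>j\<le>k. y j z) powr p"
      using M1 y0 by (simp add: powr_mult sum_nonneg)
    also have "\<dots> \<le> M powr p * ((real k + 1) powr p * (\<Sum>j\<le>k. y j z powr p))"
      by (intro mult_left_mono powr_sum_bound) (use y0 assms(2) in auto)
    finally show ?thesis by (simp add: C_def mult_ac)
  qed
  have "fock_integral p Ak \<le> (\<integral>\<^sup>+ z. ennreal C * (\<Sum>j\<le>k. ennreal (y j z powr p)) \<partial>lborel)"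
    unfolding fock_integral_def
  proof (rule nn_integral_mono)
    fix z
    have "ennreal ((cmod (Ak z) * exp (- (cmod z)\<^sup>2 / 2)) powr p) \<le> ennreal (C * (\<Sum>j\<le>k. y j z powr p))"
      using pt by (rule ennreal_leI)
    also have "\<dots> = ennreal C * (\<Sum>j\<le>k. ennreal (y j z powr p))"
      using C0 by (simp add: ennreal_mult sum_nonneg)
    finally show "ennreal ((cmod (Ak z) * exp (- (cmod z)\<^sup>2 / 2)) powr p) \<le> ennreal C * (\<Sum>j\<le>k. ennreal (y j z powr p))" .
  qed
  also have "\<dots> = ennreal C * (\<Sum>j\<le>k. \<integral>\<^sup>+ z. ennreal (y j z powr p) \<partial>lborel)"
  proof -
    have "(\<lambda>z. (\<Sum>j\<le>k. ennreal (y j z powr p))) \<in> borel_measurable lborel"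
      using ymeas by (intro borel_measurable_sum) auto
    hence "(\<integral>\<^sup>+ z. ennreal C * (\<Sum>j\<le>k. ennreal (y j z powr p)) \<partial>lborel)
        = ennreal C * (\<integral>\<^sup>+ z. (\<Sum>j\<le>k. ennreal (y j z powr p)) \<partial>lborel)"
      by (rule nn_integral_cmult)
    also have "(\<integral>\<^sup>+ z. (\<Sum>j\<le>k. ennreal (y j z powr p)) \<partial>lborel)
        = (\<Sum>j\<le>k. \<integral>\<^sup>+ z. ennreal (y j z powr p) \<partial>lborel)"
      by (rule nn_integral_sum) (rule ymeas)
    finally show ?thesis .
  qed
  also have "\<dots> < \<infinity>"
  proof -
    have "(\<Sum>j\<le>k. \<integral>\<^sup>+ z. ennreal (y j z powr p) \<partial>lborel) \<noteq> \<infinity>"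
    proof -
      have "\<forall>j\<in>{..k}. (\<integral>\<^sup>+ z. ennreal (y j z powr p) \<partial>lborel) \<noteq> top"
        using fin unfolding fock_integral_def y_def by (auto simp: top.not_eq_extremum)
      thus ?thesis unfolding infinity_ennreal_def by (subst ennreal_sum_eq_top) auto
    qed
    thus ?thesis by (simp add: ennreal_mult_less_top top.not_eq_extremum)
  qed
  finally have "fock_integral p Ak < \<infinity>" .
  thus ?thesis unfolding in_Fock_def using assms(3) by simp
qed

end
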